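(* Let $G$ be a graph with a cycle double cover $\mathcal D$, and let $G^+$ be a weak 9-enlargement of $G$, obtained from an edge $xy$ and a vertex $u$ (with no disk containing both $u$ and the edge $xy$) by subdividing $xy$ and joining the new vertex to $u$. If $G\setminus\{u,x,y\}$ is connected, then $G^+$ has a minor isomorphic to an $i$-enlargement of $G$ with respect to $\mathcal D$ for some $i\in\{1,3,9\}$.
   Context: Graphs are finite and simple. A cycle double cover of $G$ is a set $\mathcal D$ of distinct cycles (disks) such that each edge lies in exactly two disks. Two elements (vertices or edges) are confluent if some disk contains both. Splitting: for a vertex $v$ of degree $\ge4$ and a partition $(N_1,N_2)$ of its neighbours with $|N_1|,|N_2|\ge2$, replace $v$ by adjacent new vertices $v_1,v_2$ with $v_i$ adjacent to $N_i$. The split is conforming (w.r.t. $\mathcal D$) if (S1) among the disks containing $v$ exactly two, $D_1,D_2$, have their two neighbours of $v$ one in $N_1$ and one in $N_2$, and (S2) $D_1\cap D_2=\{v\}$; otherwise non-conforming. Enlargements: a 1-enlargement adds an edge between two non-confluent vertices; a 3-enlargement performs a non-conforming split of a vertex; a 9-enlargement, for a vertex $u$ and an edge $xy$ such that no disk contains both $u$ and the edge $xy$, $u$ is confluent with $x$ and with $y$, $u$ is adjacent to neither $x$ nor $y$, and $G\setminus\{u,x,y\}$ is connected, subdivides $xy$ by a new vertex and joins it to $u$. A weak 9-enlargement is obtained in the same way from any edge $xy$ and vertex $u$ such that no disk contains both $u$ and the edge $xy$. *)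

theory Defs
  imports Main
begin

definition wf_graph :: "'a set \<Rightarrow> 'a set set \<Rightarrow> bool" where
  "wf_graph V E \<longleftrightarrow> finite V \<and> (\<forall>e\<in>E. \<exists>a b. a \<noteq> b \<and> a \<in> V \<and> b \<in> V \<and> e = {a, b})"

definition nbrs :: "'a set set \<Rightarrow> 'a \<Rightarrow> 'a set" where
  "nbrs E v = {w. {v, w} \<in> E}"

text \<open>Connectedness of the subgraph induced on S (the empty graph counts as connected).\<close>
definition connected_on :: "'a set \<Rightarrow> 'a set set \<Rightarrow> bool" where
  "connected_on S E \<longleftrightarrow>
     (\<forall>a\<in>S. \<forall>b\<in>S. (a, b) \<in> {(p, q). p \<in> S \<and> q \<in> S \<and> {p, q} \<in> E}\<^sup>*)"

definition verts :: "'a set set \<Rightarrow> 'a set" where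
  "verts C = \<Union>C"

definition is_cycle :: "'a set \<Rightarrow> 'a set set \<Rightarrow> 'a set set \<Rightarrow> bool" where
  "is_cycle V E C \<longleftrightarrow> C \<noteq> {} \<and> C \<subseteq> E \<and> connected_on (verts C) C
     \<and> (\<forall>v\<in>verts C. card (nbrs C v) = 2)"

definition cdc :: "'a set \<Rightarrow> 'a set set \<Rightarrow> 'a set set set \<Rightarrow> bool" where
  "cdc V E D \<longleftrightarrow> finite D \<and> (\<forall>C\<in>D. is_cycle V E C)
     \<and> (\<forall>e\<in>E. card {C\<in>D. e \<in> C} = 2)"

definition confluent :: "'a set set set \<Rightarrow> 'a \<Rightarrow> 'a \<Rightarrow> bool" where
  "confluent D a b \<longleftrightarrow> (\<exists>C\<in>D. a \<in> verts C \<and> b \<in> verts C)"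

definition disk_contains_vertex_edge :: "'a set set set \<Rightarrow> 'a \<Rightarrow> 'a set \<Rightarrow> bool" where
  "disk_contains_vertex_edge D u e \<longleftrightarrow> (\<exists>C\<in>D. u \<in> verts C \<and> e \<in> C)"

definition is_split :: "'a set \<Rightarrow> 'a set set \<Rightarrow> 'a \<Rightarrow> 'a set \<Rightarrow> 'a set \<Rightarrow> 'a \<Rightarrow> 'a
    \<Rightarrow> 'a set \<Rightarrow> 'a set set \<Rightarrow> bool" where
  "is_split V E v N1 N2 v1 v2 V' E' \<longleftrightarrow>
     v \<in> V \<and> card (nbrs E v) \<ge> 4 \<and>
     N1 \<union> N2 = nbrs E v \<and> N1 \<inter> N2 = {} \<and> card N1 \<ge> 2 \<and> card N2 \<ge> 2 \<and>
     v1 \<noteq> v2 \<and> v1 \<notin> V - {v} \<and> v2 \<notin> V - {v} \<and>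
     V' = (V - {v}) \<union> {v1, v2} \<and>
     E' = {e\<in>E. v \<notin> e} \<union> {{v1, v2}} \<union> {{v1, w} | w. w \<in> N1} \<union> {{v2, w} | w. w \<in> N2}"

definition crosses :: "'a \<Rightarrow> 'a set \<Rightarrow> 'a set \<Rightarrow> 'a set set \<Rightarrow> bool" where
  "crosses v N1 N2 C \<longleftrightarrow> v \<in> verts C \<and> (\<exists>a\<in>N1. \<exists>b\<in>N2. {v, a} \<in> C \<and> {v, b} \<in> C)"

definition conforming :: "'a set set set \<Rightarrow> 'a \<Rightarrow> 'a set \<Rightarrow> 'a set \<Rightarrow> bool" where
  "conforming D v N1 N2 \<longleftrightarrow>
     (\<exists>D1 D2. D1 \<noteq> D2 \<and> {C\<in>D. crosses v N1 N2 C} = {D1, D2}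
        \<and> verts D1 \<inter> verts D2 = {v})"

definition one_enlargement :: "'a set \<Rightarrow> 'a set set \<Rightarrow> 'a set set set
    \<Rightarrow> 'a set \<Rightarrow> 'a set set \<Rightarrow> bool" where
  "one_enlargement V E D V' E' \<longleftrightarrow>
     (\<exists>a b. a \<in> V \<and> b \<in> V \<and> a \<noteq> b \<and> \<not> confluent D a b \<and> V' = V \<and> E' = insert {a, b} E)"

definition three_enlargement :: "'a set \<Rightarrow> 'a set set \<Rightarrow> 'a set set set
    \<Rightarrow> 'a set \<Rightarrow> 'a set set \<Rightarrow> bool" where
  "three_enlargement V E D V' E' \<longleftrightarrow>
     (\<exists>v N1 N2 v1 v2. is_split V E v N1 N2 v1 v2 V' E' \<and> \<not> conforming D v N1 N2)"

definition subdiv_join :: "'a set \<Rightarrow> 'a set set \<Rightarrow> 'a \<Rightarrow> 'a \<Rightarrow> 'a \<Rightarrow> 'a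
    \<Rightarrow> 'a set \<Rightarrow> 'a set set \<Rightarrow> bool" where
  "subdiv_join V E u x y w V' E' \<longleftrightarrow>
     u \<in> V \<and> {x, y} \<in> E \<and> w \<notin> V \<and>
     V' = insert w V \<and> E' = (E - {{x, y}}) \<union> {{x, w}, {w, y}, {w, u}}"

definition weak_nine_enlargement :: "'a set \<Rightarrow> 'a set set \<Rightarrow> 'a set set set
    \<Rightarrow> 'a \<Rightarrow> 'a \<Rightarrow> 'a \<Rightarrow> 'a \<Rightarrow> 'a set \<Rightarrow> 'a set set \<Rightarrow> bool" where
  "weak_nine_enlargement V E D u x y w V' E' \<longleftrightarrow>
     subdiv_join V E u x y w V' E' \<and> \<not> disk_contains_vertex_edge D u {x, y}"

definition nine_enlargement :: "'a set \<Rightarrow> 'a set set \<Rightarrow> 'a set set set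
    \<Rightarrow> 'a set \<Rightarrow> 'a set set \<Rightarrow> bool" where
  "nine_enlargement V E D V' E' \<longleftrightarrow>
     (\<exists>u x y w. subdiv_join V E u x y w V' E' \<and> \<not> disk_contains_vertex_edge D u {x, y}
        \<and> confluent D u x \<and> confluent D u y
        \<and> {u, x} \<notin> E \<and> {u, y} \<notin> E
        \<and> connected_on (V - {u, x, y}) E)"

definition is_minor :: "'b set \<Rightarrow> 'b set set \<Rightarrow> 'a set \<Rightarrow> 'a set set \<Rightarrow> bool" where
  "is_minor VH EH VG EG \<longleftrightarrow>
     (\<exists>\<phi> :: 'b \<Rightarrow> 'a set.
        (\<forall>h\<in>VH. \<phi> h \<noteq> {} \<and> \<phi> h \<subseteq> VG \<and> connected_on (\<phi> h) EG) \<and>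
        (\<forall>h\<in>VH. \<forall>h'\<in>VH. h \<noteq> h' \<longrightarrow> \<phi> h \<inter> \<phi> h' = {}) \<and>
        (\<forall>e\<in>EH. \<exists>a b. e = {a, b} \<and> (\<exists>p\<in>\<phi> a. \<exists>q\<in>\<phi> b. {p, q} \<in> EG)))"

end

theory Submission
  imports Defs
begin

lemma minor_id:
  assumes "VH \<subseteq> V'" "EH \<subseteq> E'" "\<forall>e\<in>EH. \<exists>a b. e = {a, b}"
  shows "is_minor VH EH V' E'"
  unfolding is_minor_def
proof (rule exI[of _ "\<lambda>h. {h}"], intro conjI ballI impI)
  fix h assume "h \<in> VH"
  then show "{h} \<noteq> {}" "{h} \<subseteq> V'" "connected_on {h} E'"
    using assms by (auto simp: connected_on_def)
next
  fix h h' assume "h \<noteq> h'" then show "{h} \<inter> {h'} = {}" by simp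
next
  fix e assume e: "e \<in> EH"
  then obtain a b where ab: "e = {a, b}" using assms(3) by blast
  then have "{a, b} \<in> E'" using e assms(2) by blast
  then show "\<exists>a b. e = {a, b} \<and> (\<exists>p\<in>{a}. \<exists>q\<in>{b}. {p, q} \<in> E')"
    using ab by blast
qed

lemma edge_in_V:
  assumes "wf_graph V E" "{a, b} \<in> E"
  shows "a \<in> V" "b \<in> V" "a \<noteq> b"
proof -
  obtain p q where pq: "p \<noteq> q" "p \<in> V" "q \<in> V" "{a, b} = {p, q}"
    using assms unfolding wf_graph_def by meson
  then have "(a = p \<and> b = q) \<or> (a = q \<and> b = p)" by (simp add: doubleton_eq_iff)
  then show "a \<in> V" "b \<in> V" "a \<noteq> b" using pq by auto
qed

lemma minor_one:
  assumes sj: "subdiv_join V E u x y w V' E'" and wf: "wf_graph V E" and ux: "u \<noteq> x"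
  shows "is_minor V (insert {u, x} E) V' E'"
  unfolding is_minor_def
proof (rule exI[of _ "\<lambda>h. if h = x then {x, w} else {h}"], intro conjI ballI impI)
  have xyE: "{x, y} \<in> E" using sj unfolding subdiv_join_def by simp
  have xV: "x \<in> V" and yV: "y \<in> V" using edge_in_V[OF wf xyE] by simp_all
  have wV: "w \<notin> V" and V': "V' = insert w V"
    and E': "E' = (E - {{x, y}}) \<union> {{x, w}, {w, y}, {w, u}}" and uV: "u \<in> V"
    using sj unfolding subdiv_join_def by auto
  fix h assume h: "h \<in> V"
  have "(if h = x then {x, w} else {h}) \<noteq> {} \<and> (if h = x then {x, w} else {h}) \<subseteq> V'
        \<and> connected_on (if h = x then {x, w} else {h}) E'"
  proof (cases "h = x")
    case True
    have "connected_on {x, w} E'"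
      unfolding connected_on_def
    proof (intro ballI)
      fix a b assume "a \<in> {x, w}" "b \<in> {x, w}"
      moreover have "{x, w} \<in> E'" "{w, x} \<in> E'" using E' by (simp_all add: insert_commute)
      ultimately show "(a, b) \<in> {(p, q). p \<in> {x, w} \<and> q \<in> {x, w} \<and> {p, q} \<in> E'}\<^sup>*"
        by (auto intro: r_into_rtrancl)
    qed
    then show ?thesis using True xV V' by auto
  next
    case False then show ?thesis using h V' by (auto simp: connected_on_def)
  qed
  then show "(if h = x then {x, w} else {h}) \<noteq> {}" "(if h = x then {x, w} else {h}) \<subseteq> V'"
        "connected_on (if h = x then {x, w} else {h}) E'" by auto
next
  have wV: "w \<notin> V" using sj unfolding subdiv_join_def by auto
  fix h h' assume "h \<in> V" "h' \<in> V" "h \<noteq> h'"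
  then show "(if h = x then {x, w} else {h}) \<inter> (if h' = x then {x, w} else {h'}) = {}"
    using wV by auto
next
  have wV: "w \<notin> V" and V': "V' = insert w V"
    and E': "E' = (E - {{x, y}}) \<union> {{x, w}, {w, y}, {w, u}}" and uV: "u \<in> V"
    using sj unfolding subdiv_join_def by auto
  fix e assume e: "e \<in> insert {u, x} E"
  show "\<exists>a b. e = {a, b} \<and> (\<exists>p\<in>if a = x then {x, w} else {a}. \<exists>q\<in>if b = x then {x, w} else {b}. {p, q} \<in> E')"
  proof (cases "e = {u, x}")
    case True
    have "{u, w} \<in> E'" using E' by (simp add: insert_commute)
    moreover have "u \<in> (if u = x then {x, w} else {u})" "w \<in> (if x = x then {x, w} else {x})"
      using ux by auto
    ultimately show ?thesis using True by blast
  next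
    case False
    with e have eE: "e \<in> E" by auto
    then obtain a b where ab: "e = {a, b}" "a \<noteq> b" using wf unfolding wf_graph_def by blast
    show ?thesis
    proof (cases "e = {x, y}")
      case True
      have xy: "x \<noteq> y" using True ab by auto
      have "{w, y} \<in> E'" using E' by auto
      then have "\<exists>p\<in>if x = x then {x, w} else {x}. \<exists>q\<in>if y = x then {x, w} else {y}. {p, q} \<in> E'"
        using xy by auto
      then show ?thesis using True by blast
    next
      case False
      have "{a, b} \<in> E'" using False E' eE ab(1) by blast
      moreover have "a \<in> (if a = x then {x, w} else {a})" "b \<in> (if b = x then {x, w} else {b})"
        by auto
      ultimately show ?thesis using ab(1) by blast
    qed
  qed
qed


lemma nbrs_other:
  assumes cyc: "is_cycle V E C" and xa: "{x, a} \<in> C"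
  shows "\<exists>z. z \<noteq> a \<and> {x, z} \<in> C"
proof -
  have "x \<in> verts C" using xa unfolding verts_def by blast
  then have "card (nbrs C x) = 2" using cyc unfolding is_cycle_def by blast
  then obtain p q where pq: "nbrs C x = {p, q}" "p \<noteq> q" by (auto simp: card_2_iff)
  have "p \<in> nbrs C x" "q \<in> nbrs C x" using pq by auto
  then have "{x, p} \<in> C" "{x, q} \<in> C" unfolding nbrs_def by auto
  then show ?thesis using pq(2) by (cases "p = a") auto
qed

lemma disk_card:
  assumes "cdc V E D" "e \<in> E"
  shows "card {C\<in>D. e \<in> C} = 2" "finite D"
  using assms unfolding cdc_def by auto


lemma split_case:
  assumes wf: "wf_graph V E" and cd: "cdc V E D"
    and sj: "subdiv_join V E u x y w V' E'"
    and nd: "\<not> disk_contains_vertex_edge D u {x, y}"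
    and xu: "{x, u} \<in> E"
  shows "\<exists>VH EH. three_enlargement V E D VH EH \<and> is_minor VH EH V' E'"
proof -
  have xyE: "{x, y} \<in> E" and wV: "w \<notin> V" and V': "V' = insert w V"
    and E': "E' = (E - {{x, y}}) \<union> {{x, w}, {w, y}, {w, u}}" and uV: "u \<in> V"
    using sj unfolding subdiv_join_def by auto
  have xV: "x \<in> V" and yV: "y \<in> V" and xy: "x \<noteq> y" using edge_in_V[OF wf xyE] by simp_all
  have ux: "x \<noteq> u" using edge_in_V[OF wf xu] by simp
  have finD: "finite D" using cd unfolding cdc_def by blast
  have cycD: "\<And>C. C \<in> D \<Longrightarrow> is_cycle V E C" using cd unfolding cdc_def by blast
  have noU: "u \<notin> verts C" if "C \<in> D" "{x, y} \<in> C" for C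
    using nd that unfolding disk_contains_vertex_edge_def by blast
  have inV: "a \<in> verts C" if "{a, b} \<in> C" for a b C
    using that unfolding verts_def by blast
  define Dxy where "Dxy = {C\<in>D. {x, y} \<in> C}"
  define Dxu where "Dxu = {C\<in>D. {x, u} \<in> C}"
  have cxy: "card Dxy = 2" unfolding Dxy_def using disk_card[OF cd xyE] by simp
  have cxu: "card Dxu = 2" unfolding Dxu_def using disk_card[OF cd xu] by simp
  have uy: "u \<noteq> y"
  proof
    assume "u = y"
    from cxy have "Dxy \<noteq> {}" by auto
    then obtain C where "C \<in> D" "{x, y} \<in> C" unfolding Dxy_def by auto
    moreover have "y \<in> verts C" using inV[of y x C] calculation(2) by (simp add: insert_commute)
    ultimately show False using noU \<open>u = y\<close> by blast
  qed
  have disj: "Dxy \<inter> Dxu = {}"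
  proof (rule ccontr)
    assume "Dxy \<inter> Dxu \<noteq> {}"
    then obtain C where C: "C \<in> D" "{x, y} \<in> C" "{x, u} \<in> C" unfolding Dxy_def Dxu_def by auto
    have "u \<in> verts C" using inV[of u x C] C(3) by (simp add: insert_commute)
    then show False using noU C by blast
  qed
  have finxy: "finite Dxy" "finite Dxu" using finD unfolding Dxy_def Dxu_def by auto
  have c4: "card (Dxy \<union> Dxu) = 4" using card_Un_disjoint[OF finxy disj] cxy cxu by simp
  define N1 where "N1 = nbrs E x - {y, u}"
  define N2 where "N2 = {y, u}"
  have nbV: "nbrs E x \<subseteq> V"
  proof
    fix z assume "z \<in> nbrs E x"
    then have "{x, z} \<in> E" unfolding nbrs_def by simp
    then show "z \<in> V" by (rule edge_in_V(2)[OF wf])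
  qed
  have finN: "finite (nbrs E x)" using nbV wf unfolding wf_graph_def using finite_subset by blast
  have claim: "\<exists>z\<in>N1. {x, z} \<in> C \<and> (({x, y} \<in> C \<and> C \<in> D) \<or> ({x, u} \<in> C \<and> C \<in> D))"
    if C: "C \<in> Dxy \<union> Dxu" for C
  proof (cases "C \<in> Dxy")
    case True
    then have CD: "C \<in> D" and e: "{x, y} \<in> C" unfolding Dxy_def by auto
    obtain z where z: "z \<noteq> y" "{x, z} \<in> C" using nbrs_other[OF cycD[OF CD] e] by blast
    have "z \<in> verts C" using inV[of z x C] z(2) by (simp add: insert_commute)
    then have "z \<noteq> u" using noU[OF CD e] by blast
    moreover have "{x, z} \<in> E" using z(2) cycD[OF CD] unfolding is_cycle_def by blast
    ultimately have "z \<in> N1" using z(1) unfolding N1_def nbrs_def by simp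
    then show ?thesis using z(2) e CD by blast
  next
    case False
    then have CD: "C \<in> D" and e: "{x, u} \<in> C" using C unfolding Dxu_def by auto
    obtain z where z: "z \<noteq> u" "{x, z} \<in> C" using nbrs_other[OF cycD[OF CD] e] by blast
    have "z \<noteq> y"
    proof
      assume "z = y"
      then have "{x, y} \<in> C" using z(2) by simp
      moreover have "u \<in> verts C" using inV[of u x C] e by (simp add: insert_commute)
      ultimately show False using noU CD by blast
    qed
    moreover have "{x, z} \<in> E" using z(2) cycD[OF CD] unfolding is_cycle_def by blast
    ultimately have "z \<in> N1" using z(1) unfolding N1_def nbrs_def by simp
    then show ?thesis using z(2) e CD by blast
  qed
  have finN1: "finite N1" using finN unfolding N1_def by simp
  have cN1: "card N1 \<ge> 2"
  proof (rule ccontr)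
    assume "\<not> card N1 \<ge> 2"
    then have lt: "card N1 < 2" by simp
    have "Dxy \<noteq> {}" using cxy by auto
    then obtain C0 where "C0 \<in> Dxy \<union> Dxu" by blast
    then obtain z0 where z0: "z0 \<in> N1" using claim by blast
    have N1s: "N1 = {z0}"
    proof
      show "N1 \<subseteq> {z0}"
      proof
        fix z assume "z \<in> N1"
        show "z \<in> {z0}"
        proof (rule ccontr)
          assume "z \<notin> {z0}"
          then have "{z, z0} \<subseteq> N1" "card {z, z0} = 2" using \<open>z \<in> N1\<close> z0 by auto
          then have "card N1 \<ge> 2" using card_mono[OF finN1] by metis
          then show False using lt by simp
        qed
      qed
    qed (use z0 in simp)
    have z0E: "{x, z0} \<in> E" using z0 unfolding N1_def nbrs_def by simp
    have "Dxy \<union> Dxu \<subseteq> {C\<in>D. {x, z0} \<in> C}"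
    proof
      fix C assume "C \<in> Dxy \<union> Dxu"
      then obtain z where "z \<in> N1" "{x, z} \<in> C" "C \<in> D" using claim by blast
      then show "C \<in> {C\<in>D. {x, z0} \<in> C}" using N1s by simp
    qed
    then have "card (Dxy \<union> Dxu) \<le> card {C\<in>D. {x, z0} \<in> C}"
      using finD by (intro card_mono) auto
    then show False using c4 disk_card[OF cd z0E] by simp
  qed
  have yN: "y \<in> nbrs E x" and uN: "u \<in> nbrs E x" using xyE xu unfolding nbrs_def by auto
  have nbU: "N1 \<union> N2 = nbrs E x" using yN uN unfolding N1_def N2_def by auto
  have nbI: "N1 \<inter> N2 = {}" unfolding N1_def N2_def by auto
  have cN2: "card N2 = 2" unfolding N2_def using uy by simp
  have cnb: "card (nbrs E x) \<ge> 4"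
    using card_Un_disjoint[OF finN1 _ nbI] cN1 cN2 nbU unfolding N2_def by simp
  have nc: "\<not> conforming D x N1 N2"
  proof
    assume "conforming D x N1 N2"
    then obtain D1 D2 where DD: "{C\<in>D. crosses x N1 N2 C} = {D1, D2}"
      unfolding conforming_def by blast
    have "Dxy \<union> Dxu \<subseteq> {C\<in>D. crosses x N1 N2 C}"
    proof
      fix C assume C: "C \<in> Dxy \<union> Dxu"
      then obtain z where z: "z \<in> N1" "{x, z} \<in> C"
        and o: "({x, y} \<in> C \<and> C \<in> D) \<or> ({x, u} \<in> C \<and> C \<in> D)"
        using claim by blast
      have xv: "x \<in> verts C" using inV[OF z(2)] .
      from o show "C \<in> {C\<in>D. crosses x N1 N2 C}"
      proof
        assume a: "{x, y} \<in> C \<and> C \<in> D"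
        have "y \<in> N2" unfolding N2_def by simp
        then have "crosses x N1 N2 C" using a z xv unfolding crosses_def by blast
        then show ?thesis using a by simp
      next
        assume a: "{x, u} \<in> C \<and> C \<in> D"
        have "u \<in> N2" unfolding N2_def by simp
        then have "crosses x N1 N2 C" using a z xv unfolding crosses_def by blast
        then show ?thesis using a by simp
      qed
    qed
    then have "card (Dxy \<union> Dxu) \<le> card {D1, D2}" unfolding DD[symmetric]
      using finD by (intro card_mono) auto
    moreover have "card {D1, D2} \<le> 2" by (simp add: card_insert_le_m1)
    ultimately show False using c4 by simp
  qed
  define EH where "EH = {e\<in>E. x \<notin> e} \<union> {{x, w}} \<union> {{x, a} | a. a \<in> N1} \<union> {{w, a} | a. a \<in> N2}"
  have xw: "x \<noteq> w" using xV wV by auto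
  have spl: "is_split V E x N1 N2 x w V' EH"
    unfolding is_split_def
    using xV cnb nbU nbI cN1 cN2 xw wV V' EH_def by auto
  have EHsub: "EH \<subseteq> E'"
  proof
    fix e assume "e \<in> EH"
    then consider (a) "e \<in> E" "x \<notin> e" | (b) "e = {x, w}" | (c) a where "e = {x, a}" "a \<in> N1"
      | (d) a where "e = {w, a}" "a \<in> N2"
      unfolding EH_def by blast
    then show "e \<in> E'"
    proof cases
      case a then show ?thesis using E' by auto
    next
      case b then show ?thesis using E' by simp
    next
      case (c a)
      then have "{x, a} \<in> E" "a \<noteq> y" unfolding N1_def nbrs_def by auto
      moreover have "{x, a} \<noteq> {x, y}" using calculation(2) xy by (auto simp: doubleton_eq_iff)
      ultimately show ?thesis using c(1) E' by simp
    next
      case (d a) then show ?thesis using E' unfolding N2_def by auto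
    qed
  qed
  have EHf: "\<forall>e\<in>EH. \<exists>a b. e = {a, b}"
  proof
    fix e assume "e \<in> EH"
    then consider (a) "e \<in> E" | (b) "e = {x, w}" | (c) a where "e = {x, a}"
      | (d) a where "e = {w, a}"
      unfolding EH_def by blast
    then show "\<exists>a b. e = {a, b}"
    proof cases
      case a then show ?thesis using wf unfolding wf_graph_def by blast
    qed blast+
  qed
  have "is_minor V' EH V' E'" using minor_id[OF _ EHsub EHf] by simp
  moreover have "three_enlargement V E D V' EH"
    unfolding three_enlargement_def using spl nc by blast
  ultimately show ?thesis by blast
qed


lemma sj_swap:
  assumes "subdiv_join V E u x y w V' E'"
  shows "subdiv_join V E u y x w V' E'"
proof -
  have a: "{y, x} = {x, y}" "{y, w} = {w, y}" "{w, x} = {x, w}" by auto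
  have "{{y, w}, {w, x}, {w, u}} = {{x, w}, {w, y}, {w, u}}" unfolding a by auto
  then show ?thesis using assms unfolding subdiv_join_def a(1) by simp
qed

theorem lemma6p1:
  fixes V :: "'a set" and E :: "'a set set" and D :: "'a set set set"
    and u x y w :: 'a and V' :: "'a set" and E' :: "'a set set"
  assumes "wf_graph V E"
    and "cdc V E D"
    and "weak_nine_enlargement V E D u x y w V' E'"
    and "connected_on (V - {u, x, y}) E"
  shows "\<exists>VH EH. (one_enlargement V E D VH EH \<or> three_enlargement V E D VH EH
                   \<or> nine_enlargement V E D VH EH)
                 \<and> is_minor VH EH V' E'"
proof -
  note wf = assms(1) and cd = assms(2)
  have sj: "subdiv_join V E u x y w V' E'" and nd: "\<not> disk_contains_vertex_edge D u {x, y}"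
    using assms(3) unfolding weak_nine_enlargement_def by auto
  have sj': "subdiv_join V E u y x w V' E'" using sj_swap[OF sj] .
  have nd': "\<not> disk_contains_vertex_edge D u {y, x}" using nd by (simp add: insert_commute)
  have xyE: "{x, y} \<in> E" and wV: "w \<notin> V" and V': "V' = insert w V"
    and E': "E' = (E - {{x, y}}) \<union> {{x, w}, {w, y}, {w, u}}" and uV: "u \<in> V"
    using sj unfolding subdiv_join_def by auto
  have xV: "x \<in> V" and yV: "y \<in> V" using edge_in_V[OF wf xyE] by simp_all
  have "card {C\<in>D. {x, y} \<in> C} = 2" using disk_card[OF cd xyE] by simp
  then have "{C\<in>D. {x, y} \<in> C} \<noteq> {}" by (metis card.empty zero_neq_numeral)
  then obtain C where C: "C \<in> D" "{x, y} \<in> C" by auto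
  have "x \<in> verts C" "y \<in> verts C" using C(2) unfolding verts_def by auto
  then have ux: "u \<noteq> x" and uy: "u \<noteq> y" using nd C unfolding disk_contains_vertex_edge_def by auto
  show ?thesis
  proof (cases "\<not> confluent D u x")
    case True
    have "one_enlargement V E D V (insert {u, x} E)"
      unfolding one_enlargement_def using uV xV ux True by blast
    then show ?thesis using minor_one[OF sj wf ux] by blast
  next
    case cx: False
    show ?thesis
    proof (cases "\<not> confluent D u y")
      case True
      have "one_enlargement V E D V (insert {u, y} E)"
        unfolding one_enlargement_def using uV yV uy True by blast
      then show ?thesis using minor_one[OF sj' wf uy] by blast
    next
      case cy: False
      show ?thesis
      proof (cases "{u, x} \<in> E")
        case True
        then have "{x, u} \<in> E" by (simp add: insert_commute)
        then show ?thesis using split_case[OF wf cd sj nd] by blast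
      next
        case nx: False
        show ?thesis
        proof (cases "{u, y} \<in> E")
          case True
          then have "{y, u} \<in> E" by (simp add: insert_commute)
          then show ?thesis using split_case[OF wf cd sj' nd'] by blast
        next
          case ny: False
          have "nine_enlargement V E D V' E'"
            unfolding nine_enlargement_def
            using sj nd cx cy nx ny assms(4) by blast
          moreover have "\<forall>e\<in>E'. \<exists>a b. e = {a, b}"
          proof
            fix e assume "e \<in> E'"
            then consider (a) "e \<in> E" | (b) "e = {x, w}" | (c) "e = {w, y}" | (d) "e = {w, u}"
              using E' by blast
            then show "\<exists>a b. e = {a, b}"
            proof cases
              case a then show ?thesis using wf unfolding wf_graph_def by blast
            qed blast+
          qed
          then have "is_minor V' E' V' E'" using minor_id[of V' V' E' E'] by simp
          ultimately show ?thesis by blast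
        qed
      qed
    qed
  qed
qed

end
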